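(* Let $\{x^k\}_{k\in\mathbb N}$ and $\{d^k\}_{k\in\mathbb N}$ be sequences in $\mathbb R^n$ such that $$\sum_{k=1}^\infty \|x^{k+1}-x^k\|\cdot\|d^k\|<\infty.$$ If $\bar x$ is an accumulation point of $\{x^k\}$ and $0$ is an accumulation point of $\{d^k\}$, then there exists an infinite set $J\subset\mathbb N$ such that $x^k\to\bar x$ and $d^k\to 0$ as $k\to\infty$, $k\in J$.
   Context: $\|\cdot\|$ is the Euclidean norm on $\mathbb R^n$ and $\mathbb N=\{1,2,\dots\}$. *)

theory Defs
  imports "HOL-Analysis.Analysis"
begin

end

theory Submission
  imports Defs
begin

lemma key:
  fixes x d :: "nat \<Rightarrow> 'a::real_normed_vector" and xbar :: 'a
  assumes summ: "summable (\<lambda>k. norm (x (Suc k) - x k) * norm (d k))"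
    and acc_x: "\<forall>e>0. \<exists>\<^sub>F k in sequentially. dist (x k) xbar < e"
    and acc_d: "\<forall>e>0. \<exists>\<^sub>F k in sequentially. norm (d k) < e"
    and e: "e > 0"
  shows "\<exists>\<^sub>F k in sequentially. dist (x k) xbar < e \<and> norm (d k) < e"
proof (rule ccontr)
  define a where "a = (\<lambda>k. norm (x (Suc k) - x k) * norm (d k))"
  assume "\<not> ?thesis"
  then obtain K where K: "\<And>k. k \<ge> K \<Longrightarrow> dist (x k) xbar \<ge> e \<or> norm (d k) \<ge> e"
    unfolding frequently_sequentially by (auto simp: not_less)
  have "e*e/2 > 0" using e by simp
  with summ obtain N where N: "\<And>m n. m \<ge> N \<Longrightarrow> norm (sum a {m..<n}) < e*e/2"
    unfolding summable_Cauchy a_def by blast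
  have "e/2 > 0" using e by simp
  with acc_x obtain k1 where k1: "k1 \<ge> max N K" "dist (x k1) xbar < e/2"
    unfolding frequently_sequentially by blast
  from acc_d e obtain m2 where m2: "m2 \<ge> k1" "norm (d m2) < e"
    unfolding frequently_sequentially by blast
  define m where "m = (LEAST m. m \<ge> k1 \<and> norm (d m) < e)"
  have m: "m \<ge> k1" "norm (d m) < e" unfolding m_def
    using LeastI_ex[of "\<lambda>m. m \<ge> k1 \<and> norm (d m) < e"] m2 by blast+
  have below: "\<And>k. k1 \<le> k \<Longrightarrow> k < m \<Longrightarrow> norm (d k) \<ge> e"
    unfolding m_def using not_less_Least by force
  have dxm: "dist (x m) xbar \<ge> e" using K[of m] m k1 by auto
  have "e/2 < dist (x m) (x k1)"
    using dxm k1(2) dist_triangle[of "x m" xbar "x k1"] by (simp add: dist_commute)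
  also have "\<dots> = norm (\<Sum>i = k1..<m. x (Suc i) - x i)"
    using m(1) by (simp add: sum_Suc_diff' dist_norm)
  also have "\<dots> \<le> (\<Sum>i = k1..<m. norm (x (Suc i) - x i))" by (rule norm_sum)
  finally have s: "e/2 < (\<Sum>i = k1..<m. norm (x (Suc i) - x i))" .
  have "e * (\<Sum>i = k1..<m. norm (x (Suc i) - x i)) = (\<Sum>i = k1..<m. e * norm (x (Suc i) - x i))"
    by (simp add: sum_distrib_left)
  also have "\<dots> \<le> sum a {k1..<m}" unfolding a_def
    by (rule sum_mono) (use below in \<open>auto simp: mult.commute intro!: mult_right_mono\<close>)
  finally have "e * (e/2) < sum a {k1..<m}"
    using s e by (smt (verit) mult_strict_left_mono)
  moreover have "norm (sum a {k1..<m}) < e*e/2" using N k1 by auto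
  ultimately show False by simp
qed

theorem mainTheorem1:
  fixes x d :: "nat \<Rightarrow> real ^ 'n" and xbar :: "real ^ 'n"
  assumes summ: "summable (\<lambda>k. norm (x (Suc k + 1) - x (k + 1)) * norm (d (k + 1)))"
    and acc_x: "\<forall>e>0. \<exists>\<^sub>F k in sequentially. dist (x k) xbar < e"
    and acc_d: "\<forall>e>0. \<exists>\<^sub>F k in sequentially. norm (d k) < e"
  shows "\<exists>J. infinite J \<and> J \<subseteq> {1..} \<and>
           (x \<longlongrightarrow> xbar) (inf sequentially (principal J)) \<and>
           (d \<longlongrightarrow> 0) (inf sequentially (principal J))"
proof -
  have s: "summable (\<lambda>k. norm (x (Suc k) - x k) * norm (d k))"
    using summ summable_Suc_iff[of "\<lambda>k. norm (x (Suc k) - x k) * norm (d k)"] by simp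
  define P where "P = (\<lambda>n k. dist (x k) xbar < 1 / (real n + 1) \<and> norm (d k) < 1 / (real n + 1))"
  have fr: "\<And>n N. \<exists>k\<ge>N. P n k"
  proof -
    fix n N
    have "\<exists>\<^sub>F k in sequentially. P n k"
      unfolding P_def by (rule key[OF s acc_x acc_d]) simp
    then show "\<exists>k\<ge>N. P n k" unfolding frequently_sequentially by blast
  qed
  define r where "r = rec_nat (SOME k. k \<ge> 1 \<and> P 0 k) (\<lambda>n rn. SOME k. k \<ge> Suc rn \<and> P (Suc n) k)"
  have r0: "r 0 \<ge> 1 \<and> P 0 (r 0)" unfolding r_def using someI_ex[OF fr[where n=0 and N=1]] by simp
  have rS: "\<And>n. r (Suc n) \<ge> Suc (r n) \<and> P (Suc n) (r (Suc n))"
  proof -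
    fix n show "r (Suc n) \<ge> Suc (r n) \<and> P (Suc n) (r (Suc n))"
      using someI_ex[OF fr[where n="Suc n" and N="Suc (r n)"]] unfolding r_def by simp
  qed
  have Pr: "\<And>n. P n (r n)" using r0 rS by (case_tac n) auto
  have sm: "strict_mono r" by (rule strict_monoI_Suc) (use rS Suc_le_eq in blast)
  have r1: "\<And>n. r n \<ge> 1" using r0 sm by (metis le_trans le0 strict_mono_less_eq)
  define J where "J = range r"
  have inf: "infinite J" unfolding J_def using sm strict_mono_imp_inj_on
    by (metis finite_imageD infinite_UNIV_nat)
  have ev: "\<And>e. e > 0 \<Longrightarrow> eventually (\<lambda>k. k \<in> J \<longrightarrow> dist (x k) xbar < e \<and> norm (d k) < e) sequentially"
  proof -
    fix e :: real assume e: "e > 0"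
    obtain M :: nat where M: "1 / (real M + 1) < e"
      using reals_Archimedean[OF e] by (auto simp: inverse_eq_divide add.commute)
    show "eventually (\<lambda>k. k \<in> J \<longrightarrow> dist (x k) xbar < e \<and> norm (d k) < e) sequentially"
      unfolding eventually_sequentially
    proof (intro exI allI impI)
      fix k assume k: "r M \<le> k" "k \<in> J"
      then obtain n where n: "k = r n" unfolding J_def by blast
      have "M \<le> n" using k n sm by (simp add: strict_mono_less_eq)
      hence "1 / (real n + 1) \<le> 1 / (real M + 1)" by (simp add: frac_le)
      thus "dist (x k) xbar < e \<and> norm (d k) < e" using Pr[of n] M n unfolding P_def by auto
    qed
  qed
  show ?thesis
  proof (intro exI conjI)
    show "infinite J" by (rule inf)
    show "J \<subseteq> {1..}" unfolding J_def using r1 by auto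
    show "(x \<longlongrightarrow> xbar) (inf sequentially (principal J))"
      unfolding tendsto_iff eventually_inf_principal
      by (auto intro: eventually_mono[OF ev])
    show "(d \<longlongrightarrow> 0) (inf sequentially (principal J))"
      unfolding tendsto_iff eventually_inf_principal
      by (auto intro: eventually_mono[OF ev])
  qed
qed

end
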